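(* Let $\beta\ge2$ and let $T\ge\beta$ be an even integer. Define the two LDSs on $\mathbb{R}$ (state and control in $\mathbb{R}$) $\mathcal{L}^0:=(1,-\beta/T,x_1,(w_t^0)_t,(c_t)_t)$ and $\mathcal{L}^1:=(1,-\beta/T,x_1,(w_t^1)_t,(c_t)_t)$, i.e. with dynamics $x_{t+1}=x_t-\frac\beta Tu_t+w_t^b$ for $b\in\{0,1\}$, where $x_1=1$, $c_t(x,u):=|x|+|u|$ if $t>T/2$ and $c_t(x,u):=0$ otherwise, $w_t^0:=0$ for all $t$, and $w_t^1:=-1$ if $t=T/2$ and $w_t^1:=0$ otherwise. Define $\pi^0(x):=x$ and $\pi^1(x):=0$. Then: (i) $\pi^0\in\mathcal{K}_1(\mathcal{L}^0)$, and the iterates $(x_t,u_t)_{t=1}^T$ produced by following $\pi^0$ in $\mathcal{L}^0$ satisfy $\sum_{t=1}^Tc_t(x_t,u_t)\le\frac{2T}{\beta}e^{-\beta/2}$; (ii) $\pi^1\in\mathcal{K}_1(\mathcal{L}^1)$, and the iterates produced by following $\pi^1$ in $\mathcal{L}^1$ satisfy $\sum_{t=1}^Tc_t(x_t,u_t)=0$.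
   Context: An LDS $(A,B,x_1,(w_t),(c_t))$ evolves as $x_{t+1}=Ax_t+Bu_t+w_t$ with cost $c_t(x_t,u_t)$ at time $t$. A matrix $M$ is $\kappa$-marginally stable if there is $H$ with $\|H^{-1}MH\|\le1$ and $\|M\|,\|H\|,\|H^{-1}\|\le\kappa$. $\mathcal{K}_\kappa(\mathcal{L})$ is the set of linear time-invariant policies $x\mapsto Kx$ such that $A+BK$ is $\kappa$-marginally stable. *)

theory Defs
  imports Complex_Main
begin

text \<open>Scalar (one-dimensional) linear dynamical systems: state and control in real.
  Matrices are 1x1, i.e. reals, and the operator norm is the absolute value.\<close>

definition marginally_stable :: "real \<Rightarrow> real \<Rightarrow> bool" where
  "marginally_stable \<kappa> M \<longleftrightarrow>
     (\<exists>H::real. H \<noteq> 0 \<and> \<bar>inverse H * M * H\<bar> \<le> 1 \<and>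
        \<bar>M\<bar> \<le> \<kappa> \<and> \<bar>H\<bar> \<le> \<kappa> \<and> \<bar>inverse H\<bar> \<le> \<kappa>)"

definition in_K :: "real \<Rightarrow> real \<Rightarrow> real \<Rightarrow> (real \<Rightarrow> real) \<Rightarrow> bool" where
  "in_K \<kappa> A B \<pi> \<longleftrightarrow> (\<exists>K::real. \<pi> = (\<lambda>x. K * x) \<and> marginally_stable \<kappa> (A + B * K))"

text \<open>State trajectory x_t (t \<ge> 1) of the LDS (A,B,x1,w) when following policy pi:
  x_1 = x1, x_{t+1} = A x_t + B u_t + w_t with u_t = pi x_t. Index 0 is unused.\<close>
fun lds_state :: "real \<Rightarrow> real \<Rightarrow> real \<Rightarrow> (nat \<Rightarrow> real) \<Rightarrow> (real \<Rightarrow> real) \<Rightarrow> nat \<Rightarrow> real" where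
  "lds_state A B x1 w \<pi> 0 = x1"
| "lds_state A B x1 w \<pi> (Suc 0) = x1"
| "lds_state A B x1 w \<pi> (Suc (Suc t)) =
     A * lds_state A B x1 w \<pi> (Suc t) + B * \<pi> (lds_state A B x1 w \<pi> (Suc t)) + w (Suc t)"

definition lds_control :: "real \<Rightarrow> real \<Rightarrow> real \<Rightarrow> (nat \<Rightarrow> real) \<Rightarrow> (real \<Rightarrow> real) \<Rightarrow> nat \<Rightarrow> real" where
  "lds_control A B x1 w \<pi> t = \<pi> (lds_state A B x1 w \<pi> t)"

end

theory Submission
  imports Defs
begin

lemma geo_aux:
  fixes a :: real and m :: nat
  shows "m \<le> n \<Longrightarrow> (\<Sum>t=1..n. if m < t then a^(t-1) else 0) * (1-a) = a^m - a^n"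
proof (induction n rule: dec_induct)
  case base
  then show ?case by simp
next
  case (step n)
  have "(\<Sum>t=1..Suc n. if m < t then a^(t-1) else 0) = (\<Sum>t=1..n. if m < t then a^(t-1) else 0) + a^n"
    using step.hyps by simp
  then show ?case by (simp only: distrib_right step.IH) (simp add: algebra_simps)
qed

theorem lemma10:
  fixes \<beta> :: real and T :: nat
    and c :: "nat \<Rightarrow> real \<Rightarrow> real \<Rightarrow> real"
    and w0 w1 :: "nat \<Rightarrow> real" and \<pi>0 \<pi>1 :: "real \<Rightarrow> real"
  assumes "\<beta> \<ge> 2" and "real T \<ge> \<beta>" and "even T"
    and "\<And>t x u. c t x u = (if real t > real T / 2 then \<bar>x\<bar> + \<bar>u\<bar> else 0)"
    and "\<And>t. w0 t = 0"
    and "\<And>t. w1 t = (if real t = real T / 2 then -1 else 0)"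
    and "\<And>x. \<pi>0 x = x" and "\<And>x. \<pi>1 x = 0"
  shows "(in_K 1 1 (-\<beta>/T) \<pi>0 \<and>
          (\<Sum>t=1..T. c t (lds_state 1 (-\<beta>/T) 1 w0 \<pi>0 t) (lds_control 1 (-\<beta>/T) 1 w0 \<pi>0 t))
            \<le> 2 * T / \<beta> * exp (-\<beta>/2))
       \<and> (in_K 1 1 (-\<beta>/T) \<pi>1 \<and>
          (\<Sum>t=1..T. c t (lds_state 1 (-\<beta>/T) 1 w1 \<pi>1 t) (lds_control 1 (-\<beta>/T) 1 w1 \<pi>1 t)) = 0)"
proof -
  obtain m where Tm: "T = 2 * m" using assms(3) by blast
  have Tpos: "real T > 0" using assms(1,2) by linarith
  have m1: "m \<ge> 1" using Tm Tpos by simp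
  have half: "real T / 2 = real m" using Tm by simp
  have gt: "\<And>t::nat. (real t > real T / 2) = (m < t)" using half by simp
  have eqm: "\<And>t::nat. (real t = real T / 2) = (t = m)" using half by simp
  have w1': "w1 t = (if t = m then -1 else 0)" for t using assms(6)[of t] eqm[of t] by simp
  define a where "a = 1 - \<beta> / T"
  have bT: "\<beta> / T \<le> 1" "\<beta> / T > 0" using assms(1,2) Tpos by (auto simp: divide_simps)
  have a0: "0 \<le> a" "a < 1" using bT by (auto simp: a_def)
  have ms0: "marginally_stable 1 (1 + (-\<beta>/T) * 1)"
    unfolding marginally_stable_def using bT by (intro exI[of _ 1]) auto
  have ms1: "marginally_stable 1 (1 + (-\<beta>/T) * 0)"
    unfolding marginally_stable_def by (intro exI[of _ 1]) auto
  have K0: "in_K 1 1 (-\<beta>/T) \<pi>0"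
    unfolding in_K_def using ms0 assms(7) by (intro exI[of _ 1]) auto
  have K1: "in_K 1 1 (-\<beta>/T) \<pi>1"
    unfolding in_K_def using ms1 assms(8) by (intro exI[of _ 0]) auto
  have st0: "lds_state 1 (-\<beta>/T) 1 w0 \<pi>0 (Suc n) = a ^ n" for n
    by (induction n) (auto simp: assms(5,7) a_def algebra_simps)
  have st1: "lds_state 1 (-\<beta>/T) 1 w1 \<pi>1 (Suc n) = (if n < m then 1 else 0)" for n
  proof (induction n)
    case 0 then show ?case using m1 by simp
  next
    case (Suc n) then show ?case by (auto simp: w1' assms(8))
  qed
  have sum1: "(\<Sum>t=1..T. c t (lds_state 1 (-\<beta>/T) 1 w1 \<pi>1 t) (lds_control 1 (-\<beta>/T) 1 w1 \<pi>1 t)) = 0"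
  proof (rule sum.neutral, intro ballI)
    fix t assume "t \<in> {1..T}"
    then obtain n where tn: "t = Suc n" by (cases t) auto
    show "c t (lds_state 1 (-\<beta>/T) 1 w1 \<pi>1 t) (lds_control 1 (-\<beta>/T) 1 w1 \<pi>1 t) = 0"
      using st1[of n] by (auto simp: tn assms(4,8) gt lds_control_def Tm)
  qed
  have eq0: "(\<Sum>t=1..T. c t (lds_state 1 (-\<beta>/T) 1 w0 \<pi>0 t) (lds_control 1 (-\<beta>/T) 1 w0 \<pi>0 t))
     = 2 * (\<Sum>t=1..T. if m < t then a^(t-1) else 0)"
    unfolding sum_distrib_left
  proof (rule sum.cong[OF refl])
    fix t assume "t \<in> {1..T}"
    then obtain n where tn: "t = Suc n" by (cases t) auto
    show "c t (lds_state 1 (-\<beta>/T) 1 w0 \<pi>0 t) (lds_control 1 (-\<beta>/T) 1 w0 \<pi>0 t) = 2 * (if m < t then a^(t-1) else 0)"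
      using st0[of n] a0 by (auto simp: tn assms(4,7) gt lds_control_def Tm)
  qed
  have g: "(\<Sum>t=1..T. if m < t then a^(t-1) else 0) * (1-a) = a^m - a^T"
    using geo_aux[of m T a] Tm by simp
  have "a^T \<ge> 0" using a0 by simp
  hence "(\<Sum>t=1..T. if m < t then a^(t-1) else 0) * (\<beta>/T) \<le> a^m"
    using g by (simp add: a_def)
  hence S: "(\<Sum>t=1..T. if m < t then a^(t-1) else 0) \<le> a^m * T / \<beta>"
    using Tpos assms(1) by (simp add: field_simps)
  have "a \<le> exp (-\<beta>/T)" using exp_ge_add_one_self[of "-\<beta>/T"] by (simp add: a_def)
  hence "a^m \<le> exp (-\<beta>/T) ^ m" using a0 by (intro power_mono) auto
  also have "\<dots> = exp (-\<beta>/2)"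
    using m1 by (simp add: exp_of_nat_mult[symmetric] Tm)
  finally have am: "a^m \<le> exp (-\<beta>/2)" .
  have "2 * (\<Sum>t=1..T. if m < t then a^(t-1) else 0) \<le> 2 * (a^m * T / \<beta>)"
    using S by simp
  also have "\<dots> \<le> 2 * T / \<beta> * exp (-\<beta>/2)"
    using am Tpos assms(1) by (simp add: divide_simps mult_left_mono)
  finally show ?thesis using K0 K1 sum1 eq0 by simp
qed

end
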